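(* Let $k>1$, let $f$ be a positive function on $\mathbb{R}$, differentiable on $[0,1]$, and define $g(R)=\dfrac{k-1}{\frac{k-1}{k}-R}$ for $R\neq\frac{k-1}{k}$. Consider the planar system $$\frac{dI}{d\tau}=I\,[f(R)(1-I-R)-k],\qquad \frac{dR}{d\tau}=(k-1)I-R.$$ If $f(R)>g(R)$ for some $R\in\left[0,\frac{k-1}{k}\right)$, then the system has at least one endemic equilibrium point $(I^*,R^* )$ with $R^*\in\left(R,\frac{k-1}{k}\right)$ and $I^*\in\left(\frac{R}{k-1},\frac1k\right)$. In particular, if $f(0)>k$, there exists at least one endemic equilibrium.
   Context: An endemic equilibrium is an equilibrium point $(I^*,R^* )$ of the system with $I^*>0$. *)

theory Defs
  imports "HOL-Analysis.Analysis"
begin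

definition gfun :: "real \<Rightarrow> real \<Rightarrow> real" where
  "gfun k R = (k - 1) / ((k - 1) / k - R)"

definition dI :: "(real \<Rightarrow> real) \<Rightarrow> real \<Rightarrow> real \<Rightarrow> real \<Rightarrow> real" where
  "dI f k I R = I * (f R * (1 - I - R) - k)"

definition dR :: "real \<Rightarrow> real \<Rightarrow> real \<Rightarrow> real" where
  "dR k I R = (k - 1) * I - R"

definition is_equilibrium :: "(real \<Rightarrow> real) \<Rightarrow> real \<Rightarrow> real \<Rightarrow> real \<Rightarrow> bool" where
  "is_equilibrium f k I R \<longleftrightarrow> dI f k I R = 0 \<and> dR k I R = 0"

definition is_endemic_equilibrium :: "(real \<Rightarrow> real) \<Rightarrow> real \<Rightarrow> real \<Rightarrow> real \<Rightarrow> bool" where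
  "is_endemic_equilibrium f k I R \<longleftrightarrow> is_equilibrium f k I R \<and> I > 0"

end

theory Submission
  imports Defs
begin

lemma part1:
  fixes f :: "real \<Rightarrow> real" and k R :: real
  assumes k: "k > 1"
    and fpos: "\<And>x. f x > 0"
    and d: "f differentiable_on {0..1}"
    and R: "0 \<le> R" "R < (k - 1) / k" "f R > gfun k R"
  shows "\<exists>Is Rs. is_endemic_equilibrium f k Is Rs
                \<and> R < Rs \<and> Rs < (k - 1) / k
                \<and> R / (k - 1) < Is \<and> Is < 1 / k"
proof -
  define c where "c = (k - 1) / k"
  have c1: "c < 1" "0 < c" using k by (auto simp: c_def field_simps)
  define h where "h x = f x * (c - x) - (k - 1)" for x
  have cf: "continuous_on {0..1} f" using d differentiable_imp_continuous_on by blast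
  have "continuous_on {R..c} f" by (rule continuous_on_subset[OF cf]) (use R c1 in auto)
  hence ch: "continuous_on {R..c} h" unfolding h_def by (intro continuous_intros)
  have cR: "0 < c - R" using R by (simp add: c_def)
  have hR: "h R > 0"
  proof -
    have "(k - 1) / (c - R) < f R" using R(3) by (simp add: gfun_def c_def)
    hence "k - 1 < f R * (c - R)" using cR by (simp add: divide_less_eq)
    thus ?thesis by (simp add: h_def)
  qed
  have hc: "h c < 0" using k by (simp add: h_def)
  obtain x where x: "R \<le> x" "x \<le> c" "h x = 0"
    using IVT2'[of h c 0 R] hR hc ch cR by auto
  have xR: "x \<noteq> R" using x hR by auto
  have xc: "x \<noteq> c" using x hc by auto
  have eq: "f x * (c - x) = k - 1" using x(3) by (simp add: h_def)
  define I where "I = x / (k - 1)"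
  have Ix: "x = (k - 1) * I" using k by (simp add: I_def)
  have "1 - I - x = (k / (k - 1)) * (c - x)" using k
    by (simp add: I_def c_def field_simps)
  hence "f x * (1 - I - x) = (k / (k - 1)) * (f x * (c - x))" by simp
  also have "\<dots> = k" using eq k by simp
  finally have "f x * (1 - I - x) = k" .
  hence equ: "is_equilibrium f k I x"
    by (simp add: is_equilibrium_def dI_def dR_def Ix)
  have xlt: "R < x" "x < c" using x xR xc by auto
  have "I > 0" using xlt R k by (simp add: I_def)
  moreover have "R / (k - 1) < I" using xlt k by (simp add: I_def divide_strict_right_mono)
  moreover have "I < 1 / k" using xlt k by (simp add: I_def c_def field_simps)
  ultimately show ?thesis using equ xlt
    by (auto simp: is_endemic_equilibrium_def c_def)
qed

theorem theorem2:
  fixes f :: "real \<Rightarrow> real" and k :: real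
  assumes "k > 1"
    and "\<And>x. f x > 0"
    and "f differentiable_on {0..1}"
  shows "(\<forall>R. 0 \<le> R \<and> R < (k - 1) / k \<and> f R > gfun k R \<longrightarrow>
            (\<exists>Is Rs. is_endemic_equilibrium f k Is Rs
                \<and> R < Rs \<and> Rs < (k - 1) / k
                \<and> R / (k - 1) < Is \<and> Is < 1 / k))
         \<and> (f 0 > k \<longrightarrow> (\<exists>Is Rs. is_endemic_equilibrium f k Is Rs))"
proof (intro conjI allI impI)
  fix R assume "0 \<le> R \<and> R < (k - 1) / k \<and> f R > gfun k R"
  thus "\<exists>Is Rs. is_endemic_equilibrium f k Is Rs
                \<and> R < Rs \<and> Rs < (k - 1) / k
                \<and> R / (k - 1) < Is \<and> Is < 1 / k"
    using part1[OF assms] by blast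
next
  assume f0: "f 0 > k"
  have g0: "gfun k 0 = k" using assms(1) by (simp add: gfun_def)
  have "0 < (k - 1) / k" using assms(1) by simp
  thus "\<exists>Is Rs. is_endemic_equilibrium f k Is Rs"
    using part1[OF assms, of 0] f0 g0 by auto
qed

end
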